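(* Let $\|\cdot\|$ be an arbitrary seminorm on $\mathbb{R}^n$, let $\gamma>0$ and $\alpha\ge1$ be constants, and let $A$ be a deterministic or randomized online algorithm. Then there is a class $\mathfrak{C}$ containing two cost functions such that either $R_0(A)=\Omega(T)$, or, for all sufficiently large $T$, both $CR^\alpha_0(A)\ge\gamma$ and $CD^\alpha_0(A)\ge\gamma T$.
   Context: Smoothed online convex optimization (SOCO): a convex decision space $F\subseteq(\mathbb{R}^+)^n$ and a seminorm $\|\cdot\|$ on $\mathbb{R}^n$ are fixed. An online (possibly randomized) algorithm $A$ faces a sequence of cost functions $c^1,c^2,\dots$ with $c^t:F\to\mathbb{R}^+$, and produces decisions $x^1,x^2,\dots\in F$, where $x^s$ may depend only on $c^1,\dots,c^{s-1}$ and on the algorithm's internal randomness. For $\alpha\ge 0$ and lookahead $i\in\mathbb{N}$, the $\alpha$-penalized cost with lookahead $i$ over horizon $T$ is $C_i^\alpha(A)=\mathbb{E}\big[\sum_{t=1}^T c^t(x^{t+i})+\alpha\|x^{t+i}-x^{t+i-1}\|\big]$, with initial action $x^i=0$ and expectation over the algorithm's randomness; write $C_i=C_i^1$. The static optimum is $OPT_s=\min_{x\in F}\sum_{t=1}^T c^t(x)$, and for $\alpha\ge1$ the $\alpha$-unfair dynamic optimum is $OPT_d^\alpha=\min_{(x^1,\dots,x^T)\in F^T}\sum_{t=1}^T c^t(x^t)+\alpha\|x^t-x^{t-1}\|$ (with $x^0=0$). For a class $\mathfrak{C}$ of cost functions: the regret $R_i(A)$ is (at most) $\rho(T)$ if for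 every sequence $(c^1,\dots,c^T)\in\mathfrak{C}^T$, $C_i^0(A)-OPT_s\le\rho(T)$; the $\alpha$-unfair competitive ratio $CR_i^\alpha(A)$ is $\rho(T)$ if for every such sequence $C_i(A)\le\rho(T)\,OPT_d^\alpha+O(1)$; the $\alpha$-unfair competitive difference $CD_i^\alpha(A)$ is $\rho(T)$ if for every such sequence $C_i(A)-OPT_d^\alpha\le\rho(T)$. Statements such as $R_0(A)=\Omega(T)$ or $CR_0^\alpha(A)\ge\gamma$ refer to the best (smallest) $\rho(T)$ for which the corresponding guarantee holds over all sequences from $\mathfrak{C}$. *)

theory Defs
  imports "HOL-Probability.Probability"
begin

type_synonym 'n cost = "real ^ 'n \<Rightarrow> real"

definition seminorm :: "(real ^ 'n \<Rightarrow> real) \<Rightarrow> bool" where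
  "seminorm N \<longleftrightarrow> (\<forall>x y. N (x + y) \<le> N x + N y) \<and> (\<forall>c x. N (c *\<^sub>R x) = \<bar>c\<bar> * N x)"

definition decision_space :: "(real ^ 'n) set \<Rightarrow> bool" where
  "decision_space F \<longleftrightarrow> convex F \<and> F \<noteq> {} \<and> F \<subseteq> {x. \<forall>i. 0 \<le> x $ i}"

text \<open>Online (possibly randomized) algorithm on F: a probability space M of internal
  randomness and a decision rule A; the decision for the (t+1)-st round is
  A w [c^1,...,c^t], i.e. it depends only on the earlier cost functions.
  A deterministic algorithm is the case of a one-point (Dirac) probability space.\<close>
definition online_alg :: "(real ^ 'n) set \<Rightarrow> 'w measure \<Rightarrow> ('w \<Rightarrow> 'n cost list \<Rightarrow> real ^ 'n) \<Rightarrow> bool" where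
  "online_alg F M A \<longleftrightarrow> prob_space M \<and> (\<forall>w\<in>space M. \<forall>l. A w l \<in> F)
     \<and> (\<forall>l. (\<lambda>w. A w l) \<in> borel_measurable M)"

text \<open>Penalized cost of a trajectory x (0-based: x t is the action for cs ! t,
  the action before the first round is 0).\<close>
definition path_cost :: "(real ^ 'n \<Rightarrow> real) \<Rightarrow> real \<Rightarrow> 'n cost list \<Rightarrow> (nat \<Rightarrow> real ^ 'n) \<Rightarrow> real" where
  "path_cost N a cs x = (\<Sum>t<length cs. (cs ! t) (x t) + a * N (x t - (if t = 0 then 0 else x (t - 1))))"

text \<open>Expected a-penalized cost with lookahead 0, C_0^a(A), as an extended real.\<close>
definition alg_cost :: "(real ^ 'n \<Rightarrow> real) \<Rightarrow> real \<Rightarrow> 'w measure \<Rightarrow> ('w \<Rightarrow> 'n cost list \<Rightarrow> real ^ 'n)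
    \<Rightarrow> 'n cost list \<Rightarrow> ereal" where
  "alg_cost N a M A cs = enn2ereal (\<integral>\<^sup>+ w. ennreal (path_cost N a cs (\<lambda>t. A w (take t cs))) \<partial>M)"

definition OPT_s :: "(real ^ 'n) set \<Rightarrow> 'n cost list \<Rightarrow> real" where
  "OPT_s F cs = (INF x\<in>F. \<Sum>t<length cs. (cs ! t) x)"

definition OPT_d :: "(real ^ 'n \<Rightarrow> real) \<Rightarrow> real \<Rightarrow> (real ^ 'n) set \<Rightarrow> 'n cost list \<Rightarrow> real" where
  "OPT_d N a F cs = (INF x\<in>{x. \<forall>t<length cs. x t \<in> F}. path_cost N a cs x)"

definition seqs :: "'n cost set \<Rightarrow> nat \<Rightarrow> 'n cost list set" where
  "seqs C T = {cs. length cs = T \<and> set cs \<subseteq> C}"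

text \<open>R_0(A) = Omega(T): the best regret bound rho(T) is eventually at least c*T.\<close>
definition regret_Omega_T where
  "regret_Omega_T N F M A C \<longleftrightarrow> (\<exists>c>0. \<exists>T0. \<forall>T\<ge>T0. \<exists>cs\<in>seqs C T.
      ereal (OPT_s F cs + c * real T) \<le> alg_cost N 0 M A cs)"

text \<open>CR_0^a(A) >= g for all sufficiently large T: for every additive constant K,
  for all large T, no ratio rho < g satisfies C_0(A) <= rho * OPT_d^a + K on all
  sequences of length T.\<close>
definition CR_ge_eventually where
  "CR_ge_eventually N a F M A C g \<longleftrightarrow> (\<forall>K::real. \<exists>T0. \<forall>T\<ge>T0. \<forall>\<rho><g. \<exists>cs\<in>seqs C T.
      ereal (\<rho> * OPT_d N a F cs + K) < alg_cost N 1 M A cs)"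

text \<open>CD_0^a(A) >= g*T for all sufficiently large T.\<close>
definition CD_ge_eventually where
  "CD_ge_eventually N a F M A C g \<longleftrightarrow> (\<exists>T0. \<forall>T\<ge>T0. \<forall>\<rho>< g * real T. \<exists>cs\<in>seqs C T.
      ereal (OPT_d N a F cs + \<rho>) < alg_cost N 1 M A cs)"

end

theory Submission
  imports Defs
begin

definition cube :: "(real ^ 'n) set" where
  "cube = {x. \<forall>i. 0 \<le> x $ i \<and> x $ i \<le> 1}"

definition fcost :: "real \<Rightarrow> 'n::finite \<Rightarrow> 'n cost" where
  "fcost m i0 = (\<lambda>x. m * x $ i0)"

definition gcost :: "real \<Rightarrow> 'n::finite \<Rightarrow> 'n cost" where
  "gcost m i0 = (\<lambda>x. m * (1 - x $ i0))"

definition pexp :: "'w measure \<Rightarrow> ('w \<Rightarrow> 'n cost list \<Rightarrow> real ^ 'n) \<Rightarrow> 'n::finite \<Rightarrow> 'n cost list \<Rightarrow> real" where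
  "pexp Mw A i0 l = (\<integral>w. A w l $ i0 \<partial>Mw)"

definition choice where
  "choice Mw A m i0 l = (if pexp Mw A i0 l \<ge> 1/2 then fcost m i0 else gcost m i0)"

fun adv :: "'w measure \<Rightarrow> ('w \<Rightarrow> 'n cost list \<Rightarrow> real ^ 'n) \<Rightarrow> real \<Rightarrow> 'n::finite \<Rightarrow> nat \<Rightarrow> 'n cost list" where
  "adv Mw A m i0 0 = []"
| "adv Mw A m i0 (Suc n) = adv Mw A m i0 n @ [choice Mw A m i0 (adv Mw A m i0 n)]"

lemma adv_length[simp]: "length (adv Mw A m i0 n) = n"
  by (induction n) auto

lemma adv_take: "t \<le> n \<Longrightarrow> take t (adv Mw A m i0 n) = adv Mw A m i0 t"
proof (induction n)
  case 0 then show ?case by simp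
next
  case (Suc n)
  show ?case
  proof (cases "t = Suc n")
    case True then show ?thesis by simp
  next
    case False then have "t \<le> n" using Suc by simp
    then show ?thesis using Suc by simp
  qed
qed

lemma adv_nth: "t < n \<Longrightarrow> adv Mw A m i0 n ! t = choice Mw A m i0 (adv Mw A m i0 t)"
proof (induction n)
  case 0 then show ?case by simp
next
  case (Suc n)
  show ?case
  proof (cases "t = n")
    case True then show ?thesis by (simp add: nth_append)
  next
    case False then have "t < n" using Suc by simp
    then show ?thesis using Suc by (simp add: nth_append)
  qed
qed

lemma adv_set: "set (adv Mw A m i0 n) \<subseteq> {fcost m i0, gcost m i0}"
  by (induction n) (auto simp: choice_def)

lemma seminorm_minus: "seminorm N \<Longrightarrow> N (- x) = N x"
proof -
  assume s: "seminorm N"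
  have "N ((-1) *\<^sub>R x) = \<bar>-1\<bar> * N x" using s unfolding seminorm_def by blast
  then show ?thesis by simp
qed

lemma seminorm_zero: "seminorm N \<Longrightarrow> N 0 = 0"
  unfolding seminorm_def by (metis abs_zero mult_zero_left scale_zero_left)

lemma seminorm_diff: "seminorm N \<Longrightarrow> N (x - y) \<le> N x + N y"
proof -
  assume s: "seminorm N"
  have "N (x + - y) \<le> N x + N (- y)" using s unfolding seminorm_def by blast
  then show ?thesis using seminorm_minus[OF s] by simp
qed

lemma seminorm_nonneg: "seminorm N \<Longrightarrow> N x \<ge> 0"
proof -
  assume s: "seminorm N"
  have "N (x + - x) \<le> N x + N (- x)" using s unfolding seminorm_def by blast
  then show ?thesis using seminorm_minus[OF s] seminorm_zero[OF s] by simp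
qed

lemma meas_comp:
  fixes A :: "'w \<Rightarrow> 'n cost list \<Rightarrow> real ^ 'n::finite"
  assumes "(\<lambda>w. A w l) \<in> borel_measurable Mw"
  shows "(\<lambda>w. A w l $ i0) \<in> borel_measurable Mw"
  by (rule borel_measurable_continuous_on[OF _ assms]) (intro continuous_intros)

lemma term_integrable:
  fixes A :: "'w \<Rightarrow> 'n cost list \<Rightarrow> real ^ 'n::finite"
  assumes alg: "online_alg cube Mw A"
  shows "integrable Mw (\<lambda>w. A w l $ i0)"
proof -
  interpret prob_space Mw using alg unfolding online_alg_def by blast
  show ?thesis
  proof (rule integrable_const_bound[where B=1])
    show "AE x in Mw. norm (A x l $ i0) \<le> 1"
      using alg unfolding online_alg_def cube_def by (intro AE_I2) auto
    show "(\<lambda>w. A w l $ i0) \<in> borel_measurable Mw"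
      using alg unfolding online_alg_def by (intro meas_comp) blast
  qed
qed

lemma choice_integrable:
  fixes A :: "'w \<Rightarrow> 'n cost list \<Rightarrow> real ^ 'n::finite"
  assumes alg: "online_alg cube Mw A"
  shows "integrable Mw (\<lambda>w. choice Mw A m i0 l (A w l))"
proof -
  interpret prob_space Mw using alg unfolding online_alg_def by blast
  have i: "integrable Mw (\<lambda>w. A w l $ i0)" by (rule term_integrable[OF alg])
  show ?thesis
    unfolding choice_def fcost_def gcost_def
    using i by (auto simp: right_diff_distrib)
qed

lemma choice_integral:
  fixes A :: "'w \<Rightarrow> 'n cost list \<Rightarrow> real ^ 'n::finite"
  assumes alg: "online_alg cube Mw A" and m: "m \<ge> 0"
  shows "(\<integral>w. choice Mw A m i0 l (A w l) \<partial>Mw) \<ge> m / 2"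
proof -
  interpret prob_space Mw using alg unfolding online_alg_def by blast
  have i: "integrable Mw (\<lambda>w. A w l $ i0)" by (rule term_integrable[OF alg])
  show ?thesis
  proof (cases "pexp Mw A i0 l \<ge> 1/2")
    case True
    then have "(\<integral>w. choice Mw A m i0 l (A w l) \<partial>Mw) = m * pexp Mw A i0 l"
      unfolding choice_def fcost_def pexp_def by simp
    also have "\<dots> \<ge> m * (1/2)" using True m by (intro mult_left_mono) auto
    finally show ?thesis by simp
  next
    case False
    then have "(\<integral>w. choice Mw A m i0 l (A w l) \<partial>Mw) = m * (1 - pexp Mw A i0 l)"
      unfolding choice_def gcost_def pexp_def using i prob_space
      by (simp add: right_diff_distrib)
    also have "\<dots> \<ge> m * (1/2)" using False m by (intro mult_left_mono) auto
    finally show ?thesis by simp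
  qed
qed

lemma choice_nonneg:
  assumes "x \<in> cube" "m \<ge> 0"
  shows "choice Mw A m i0 l x \<ge> 0"
  using assms unfolding choice_def fcost_def gcost_def cube_def by auto

lemma alg_lower:
  fixes A :: "'w \<Rightarrow> 'n cost list \<Rightarrow> real ^ 'n::finite"
  assumes alg: "online_alg cube Mw A" and sn: "seminorm N" and m: "m \<ge> 0"
  shows "ennreal (m * T / 2) \<le> (\<integral>\<^sup>+ w. ennreal (path_cost N 1 (adv Mw A m i0 T)
            (\<lambda>t. A w (take t (adv Mw A m i0 T)))) \<partial>Mw)"
proof -
  interpret prob_space Mw using alg unfolding online_alg_def by blast
  define S where "S w = (\<Sum>t<T. choice Mw A m i0 (adv Mw A m i0 t) (A w (adv Mw A m i0 t)))" for w
  have inS: "integrable Mw S" unfolding S_def[abs_def]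
    using choice_integrable[OF alg] by (intro Bochner_Integration.integrable_sum) blast
  have Snn: "S w \<ge> 0" if "w \<in> space Mw" for w
    unfolding S_def using alg that m unfolding online_alg_def
    by (intro sum_nonneg choice_nonneg) auto
  have le: "S w \<le> path_cost N 1 (adv Mw A m i0 T) (\<lambda>t. A w (take t (adv Mw A m i0 T)))" for w
    unfolding S_def path_cost_def adv_length
    by (intro sum_mono) (simp add: adv_take adv_nth seminorm_nonneg[OF sn])
  have "(\<integral>w. S w \<partial>Mw) = (\<Sum>t<T. \<integral>w. choice Mw A m i0 (adv Mw A m i0 t) (A w (adv Mw A m i0 t)) \<partial>Mw)"
    unfolding S_def by (rule Bochner_Integration.integral_sum) (rule choice_integrable[OF alg])
  also have "\<dots> \<ge> (\<Sum>t<T. m / 2)" by (intro sum_mono choice_integral[OF alg m])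
  finally have intS: "(\<integral>w. S w \<partial>Mw) \<ge> m * T / 2" by (simp add: mult.commute)
  have "ennreal (m * T / 2) \<le> ennreal (\<integral>w. S w \<partial>Mw)" using intS by (rule ennreal_leI)
  also have "\<dots> = (\<integral>\<^sup>+ w. ennreal (S w) \<partial>Mw)"
    by (rule nn_integral_eq_integral[symmetric, OF inS]) (use Snn in \<open>intro AE_I2\<close>)
  also have "\<dots> \<le> (\<integral>\<^sup>+ w. ennreal (path_cost N 1 (adv Mw A m i0 T)
            (\<lambda>t. A w (take t (adv Mw A m i0 T)))) \<partial>Mw)"
    by (intro nn_integral_mono ennreal_leI le)
  finally show ?thesis .
qed

lemma alg_cost_lower:
  fixes A :: "'w \<Rightarrow> 'n cost list \<Rightarrow> real ^ 'n::finite"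
  assumes alg: "online_alg cube Mw A" and sn: "seminorm N" and m: "m \<ge> 0"
  shows "ereal (m * T / 2) \<le> alg_cost N 1 Mw A (adv Mw A m i0 T)"
proof -
  have "enn2ereal (ennreal (m * T / 2)) \<le> alg_cost N 1 Mw A (adv Mw A m i0 T)"
    unfolding alg_cost_def using alg_lower[OF alg sn m, of T i0]
    by (simp add: less_eq_ennreal.rep_eq)
  then show ?thesis using m by simp
qed

lemma cube_decision: "decision_space cube"
  unfolding decision_space_def
proof (intro conjI)
  show "convex (cube :: (real ^ 'n) set)"
    unfolding convex_def
  proof (intro ballI allI impI)
    fix x y :: "real ^ 'n" and u v :: real
    assume x: "x \<in> cube" and y: "y \<in> cube" and uv: "0 \<le> u" "0 \<le> v" "u + v = 1"
    have "0 \<le> u * x $ i + v * y $ i \<and> u * x $ i + v * y $ i \<le> 1" for i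
    proof -
      have a: "0 \<le> x $ i" "x $ i \<le> 1" "0 \<le> y $ i" "y $ i \<le> 1" using x y unfolding cube_def by auto
      have "u * x $ i + v * y $ i \<le> u * 1 + v * 1"
        using a uv by (intro add_mono mult_left_mono) auto
      then show ?thesis using a uv by simp
    qed
    then show "u *\<^sub>R x + v *\<^sub>R y \<in> cube" unfolding cube_def by simp
  qed
  have "(0::real^'n) \<in> cube" unfolding cube_def by simp
  then show "cube \<noteq> {}" by blast
  show "cube \<subseteq> {x. \<forall>i. 0 \<le> x $ i}" unfolding cube_def by auto
qed

lemma costs_nonneg:
  assumes "c \<in> {fcost m i0, gcost m i0}" "x \<in> cube" "m \<ge> 0"
  shows "c x \<ge> 0"
proof -
  have b: "0 \<le> x $ i0" "x $ i0 \<le> 1" using assms(2) unfolding cube_def by auto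
  from assms(1) have "c = fcost m i0 \<or> c = gcost m i0" by blast
  then show ?thesis
  proof
    assume "c = fcost m i0" then show ?thesis using b assms(3) unfolding fcost_def by simp
  next
    assume "c = gcost m i0" then show ?thesis using b assms(3) unfolding gcost_def by simp
  qed
qed

lemma path_nonneg:
  assumes sn: "seminorm N" and a: "a \<ge> 0" and m: "m \<ge> 0"
    and cs: "set cs \<subseteq> {fcost m i0, gcost m i0}" and x: "\<forall>t<length cs. x t \<in> cube"
  shows "path_cost N a cs x \<ge> 0"
  unfolding path_cost_def
proof (intro sum_nonneg add_nonneg_nonneg)
  fix t assume t: "t \<in> {..<length cs}"
  then have c: "cs ! t \<in> {fcost m i0, gcost m i0}" using cs nth_mem by blast
  have "x t \<in> cube" using x t by simp
  then show "(cs ! t) (x t) \<ge> 0" by (rule costs_nonneg[OF c _ m])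
  show "0 \<le> a * N (x t - (if t = 0 then 0 else x (t - 1)))"
    using a seminorm_nonneg[OF sn] by simp
qed

lemma mem_ne: "x \<in> S \<Longrightarrow> S \<noteq> {}" by auto

lemma OPTd_nonneg:
  fixes cs :: "'n::finite cost list"
  assumes sn: "seminorm N" and a: "a \<ge> 0" and m: "m \<ge> 0"
    and cs: "set cs \<subseteq> {fcost m i0, gcost m i0}"
  shows "OPT_d N a cube cs \<ge> 0"
  unfolding OPT_d_def
proof (rule cINF_greatest)
  have "(\<lambda>t. 0) \<in> {x. \<forall>t<length cs. x t \<in> (cube :: (real^'n) set)}" by (simp add: cube_def)
  then show "{x. \<forall>t<length cs. x t \<in> (cube :: (real^'n) set)} \<noteq> {}" by (rule mem_ne)
  fix x assume "x \<in> {x. \<forall>t<length cs. x t \<in> (cube :: (real^'n) set)}"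
  then have "\<forall>t<length cs. x t \<in> cube" by simp
  then show "0 \<le> path_cost N a cs x" by (rule path_nonneg[OF sn a m cs])
qed

lemma OPTd_upper:
  fixes i0 :: "'n::finite" and cs :: "'n cost list"
  assumes sn: "seminorm N" and a: "a \<ge> 0" and m: "m \<ge> 0"
    and cs: "set cs \<subseteq> {fcost m i0, gcost m i0}"
  shows "OPT_d N a cube cs \<le> 2 * a * N (\<chi> i. 1 :: real ^ 'n) * length cs"
proof -
  define e where "e = (\<chi> i. 1 :: real ^ 'n)"
  define y where "y t = (if cs ! t = fcost m i0 then 0 else e)" for t
  have ycube: "y t \<in> cube" for t unfolding y_def e_def cube_def by simp
  have Ny: "N (y t) \<le> N e" for t
    unfolding y_def using seminorm_zero[OF sn] seminorm_nonneg[OF sn, of e] by simp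
  have "OPT_d N a cube cs \<le> path_cost N a cs y"
    unfolding OPT_d_def
  proof (rule cINF_lower)
    show "bdd_below (path_cost N a cs ` {x. \<forall>t<length cs. x t \<in> cube})"
    proof (rule bdd_belowI[of _ 0])
      fix z assume "z \<in> path_cost N a cs ` {x. \<forall>t<length cs. x t \<in> cube}"
      then obtain x where "\<forall>t<length cs. x t \<in> cube" "z = path_cost N a cs x" by blast
      then show "0 \<le> z" using path_nonneg[OF sn a m cs] by simp
    qed
    show "y \<in> {x. \<forall>t<length cs. x t \<in> cube}" using ycube by simp
  qed
  also have "\<dots> \<le> (\<Sum>t<length cs. 2 * a * N e)"
    unfolding path_cost_def
  proof (rule sum_mono)
    fix t assume t: "t \<in> {..<length cs}"
    then have c: "cs ! t \<in> {fcost m i0, gcost m i0}" using cs nth_mem by blast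
    have c0: "(cs ! t) (y t) = 0"
    proof (cases "cs ! t = fcost m i0")
      case True then show ?thesis unfolding y_def fcost_def by simp
    next
      case False then have "cs ! t = gcost m i0" using c by blast
      then show ?thesis using False unfolding y_def gcost_def e_def by simp
    qed
    have "N (y t - (if t = 0 then 0 else y (t - 1))) \<le> N (y t) + N (if t = 0 then 0 else y (t - 1))"
      by (rule seminorm_diff[OF sn])
    also have "\<dots> \<le> N e + N e"
      using Ny seminorm_zero[OF sn] seminorm_nonneg[OF sn, of e] by (intro add_mono) auto
    finally have "a * N (y t - (if t = 0 then 0 else y (t - 1))) \<le> a * (N e + N e)"
      using a by (rule mult_left_mono)
    then show "(cs ! t) (y t) + a * N (y t - (if t = 0 then 0 else y (t - 1))) \<le> 2 * a * N e"
      using c0 by simp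
  qed
  also have "\<dots> = 2 * a * N e * length cs" by simp
  finally show ?thesis unfolding e_def .
qed

theorem theorem2:
  fixes N :: "real ^ 'n \<Rightarrow> real" and \<gamma> \<alpha> :: real
  assumes "seminorm N" and "\<gamma> > 0" and "\<alpha> \<ge> 1"
  shows "\<exists>F. decision_space F \<and>
    (\<forall>(M :: 'w measure) A. online_alg F M A \<longrightarrow>
      (\<exists>C. card C = 2 \<and> (\<forall>c\<in>C. convex_on F c \<and> (\<forall>x\<in>F. 0 \<le> c x)) \<and>
        (regret_Omega_T N F M A C \<or>
         (CR_ge_eventually N \<alpha> F M A C \<gamma> \<and> CD_ge_eventually N \<alpha> F M A C \<gamma>))))"
proof (rule exI[of _ cube], intro conjI allI impI)
  note sn = assms(1)
  have a0: "\<alpha> \<ge> 0" using assms(3) by simp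
  define i0 :: 'n where "i0 = undefined"
  define D where "D = 2 * \<alpha> * N (\<chi> i. 1 :: real ^ 'n)"
  have D0: "D \<ge> 0" unfolding D_def using a0 seminorm_nonneg[OF sn] by simp
  define m where "m = 2 * (\<gamma> * D + D + \<gamma> + 1)"
  have m0: "m \<ge> 0" unfolding m_def using D0 assms(2) by simp
  define C where "C = {fcost m i0, gcost m i0}"
  show "decision_space (cube :: (real ^ 'n) set)" by (rule cube_decision)
  fix Mw :: "'w measure" and A :: "'w \<Rightarrow> 'n cost list \<Rightarrow> real ^ 'n"
  assume alg: "online_alg cube Mw A"
  show "\<exists>C. card C = 2 \<and> (\<forall>c\<in>C. convex_on cube c \<and> (\<forall>x\<in>cube. 0 \<le> c x)) \<and>
        (regret_Omega_T N cube Mw A C \<or>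
         (CR_ge_eventually N \<alpha> cube Mw A C \<gamma> \<and> CD_ge_eventually N \<alpha> cube Mw A C \<gamma>))"
  proof (intro exI[of _ C] conjI disjI2)
    have mp: "m > 0" unfolding m_def proof -
      have "\<gamma> * D \<ge> 0" using D0 assms(2) by simp
      then show "0 < 2 * (\<gamma> * D + D + \<gamma> + 1)" using D0 assms(2) by (smt (verit))
    qed
    have "fcost m i0 0 \<noteq> gcost m i0 0" unfolding fcost_def gcost_def using mp by simp
    then have "fcost m i0 \<noteq> gcost m i0" by metis
    then show "card C = 2" unfolding C_def by simp
    have cvx: "convex (cube :: (real ^ 'n) set)" using cube_decision unfolding decision_space_def by blast
    show "\<forall>c\<in>C. convex_on cube c \<and> (\<forall>x\<in>cube. 0 \<le> c x)"
    proof
      fix c assume c: "c \<in> C"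
      have "convex_on cube c"
        unfolding convex_on_def
      proof (intro conjI cvx ballI allI impI)
        fix x y :: "real ^ 'n" and u v :: real
        assume uv: "0 \<le> u" "0 \<le> v" "u + v = 1"
        have "c (u *\<^sub>R x + v *\<^sub>R y) = u * c x + v * c y"
        proof (cases "c = fcost m i0")
          case True then show ?thesis unfolding fcost_def by (simp add: algebra_simps)
        next
          case False then have "c = gcost m i0" using c unfolding C_def by blast
          moreover have "m = m * u + m * v" using uv(3) by (metis distrib_left mult_1_right)
          ultimately show ?thesis unfolding gcost_def by (simp add: algebra_simps)
        qed
        then show "c (u *\<^sub>R x + v *\<^sub>R y) \<le> u * c x + v * c y" by simp
      qed
      moreover have "\<forall>x\<in>cube. 0 \<le> c x"
      proof
        fix x :: "real ^ 'n" assume "x \<in> cube"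
        moreover have "c \<in> {fcost m i0, gcost m i0}" using c unfolding C_def .
        ultimately show "0 \<le> c x" using costs_nonneg m0 by blast
      qed
      ultimately show "convex_on cube c \<and> (\<forall>x\<in>cube. 0 \<le> c x)" by blast
    qed
    have seqT: "adv Mw A m i0 T \<in> seqs C T" for T
      unfolding seqs_def C_def using adv_set by simp
    have lowT: "ereal (m * T / 2) \<le> alg_cost N 1 Mw A (adv Mw A m i0 T)" for T
      by (rule alg_cost_lower[OF alg sn m0])
    have OPT0: "OPT_d N \<alpha> cube (adv Mw A m i0 T) \<ge> 0" for T
      by (rule OPTd_nonneg[OF sn a0 m0 adv_set])
    have OPT1: "OPT_d N \<alpha> cube (adv Mw A m i0 T) \<le> D * T" for T
      using OPTd_upper[OF sn a0 m0 adv_set[of Mw A m i0 T]] unfolding D_def by simp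
    show "CR_ge_eventually N \<alpha> cube Mw A C \<gamma>"
      unfolding CR_ge_eventually_def
    proof (intro allI)
      fix K :: real
      show "\<exists>T0. \<forall>T\<ge>T0. \<forall>\<rho><\<gamma>. \<exists>cs\<in>seqs C T. ereal (\<rho> * OPT_d N \<alpha> cube cs + K) < alg_cost N 1 Mw A cs"
      proof (intro exI[of _ "nat \<lceil>\<bar>K\<bar>\<rceil> + 1"] allI impI)
        fix T :: nat and \<rho> :: real
        assume T: "T \<ge> nat \<lceil>\<bar>K\<bar>\<rceil> + 1" and r: "\<rho> < \<gamma>"
        define Od where "Od = OPT_d N \<alpha> cube (adv Mw A m i0 T)"
        have "K < T" using T by linarith
        have "\<rho> * Od \<le> \<gamma> * Od" using r OPT0 unfolding Od_def by (intro mult_right_mono) auto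
        also have "\<dots> \<le> \<gamma> * (D * T)" using OPT1 assms(2) unfolding Od_def by (intro mult_left_mono) auto
        finally have "\<rho> * Od + K < \<gamma> * D * T + T" using \<open>K < T\<close> by simp
        also have "\<dots> \<le> m * T / 2" unfolding m_def using D0 assms(2)
          by (simp add: algebra_simps)
        finally have "ereal (\<rho> * Od + K) < ereal (m * T / 2)" by simp
        also have "\<dots> \<le> alg_cost N 1 Mw A (adv Mw A m i0 T)" by (rule lowT)
        finally show "\<exists>cs\<in>seqs C T. ereal (\<rho> * OPT_d N \<alpha> cube cs + K) < alg_cost N 1 Mw A cs"
          using seqT unfolding Od_def by blast
      qed
    qed
    show "CD_ge_eventually N \<alpha> cube Mw A C \<gamma>"
      unfolding CD_ge_eventually_def
    proof (intro exI[of _ 0] allI impI)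
      fix T :: nat and \<rho> :: real
      assume r: "\<rho> < \<gamma> * T"
      define Od where "Od = OPT_d N \<alpha> cube (adv Mw A m i0 T)"
      have "Od + \<rho> < D * T + \<gamma> * T" using OPT1 r unfolding Od_def by (simp add: add_mono_thms_linordered_field(4))
      also have "\<dots> \<le> m * T / 2" unfolding m_def using D0 assms(2)
        by (simp add: algebra_simps)
      finally have "ereal (Od + \<rho>) < ereal (m * T / 2)" by simp
      also have "\<dots> \<le> alg_cost N 1 Mw A (adv Mw A m i0 T)" by (rule lowT)
      finally show "\<exists>cs\<in>seqs C T. ereal (OPT_d N \<alpha> cube cs + \<rho>) < alg_cost N 1 Mw A cs"
        using seqT unfolding Od_def by blast
    qed
  qed
qed

end
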